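(* Let $R$ be an NJ-symmetric ring. If every maximal essential left ideal of $R$ is a two-sided ideal (i.e. $R$ is MELT), then $R$ is left quasi-duo; and (right-hand version) if every maximal essential right ideal of $R$ is a two-sided ideal, then $R$ is right quasi-duo.
   Context: Rings are associative with identity. $N(R)$ is the set of nilpotent elements, $J(R)$ the Jacobson radical. $R$ is NJ-symmetric if for all $a,b,c\in R$, $abc\in N(R)$ implies $bac\in J(R)$. $R$ is left (right) quasi-duo if every maximal left (right) ideal is a two-sided ideal. *)

theory Defs
  imports Main
begin

definition nilpotent_elems :: "'a::ring_1 set" where
  "nilpotent_elems = {x. \<exists>n::nat. x ^ n = 0}"

definition additive_subgroup :: "'a::ring_1 set \<Rightarrow> bool" where
  "additive_subgroup I \<longleftrightarrow> 0 \<in> I \<and> (\<forall>x\<in>I. \<forall>y\<in>I. x + y \<in> I) \<and> (\<forall>x\<in>I. - x \<in> I)"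

definition left_ideal :: "'a::ring_1 set \<Rightarrow> bool" where
  "left_ideal I \<longleftrightarrow> additive_subgroup I \<and> (\<forall>r. \<forall>x\<in>I. r * x \<in> I)"

definition right_ideal :: "'a::ring_1 set \<Rightarrow> bool" where
  "right_ideal I \<longleftrightarrow> additive_subgroup I \<and> (\<forall>r. \<forall>x\<in>I. x * r \<in> I)"

definition two_sided_ideal :: "'a::ring_1 set \<Rightarrow> bool" where
  "two_sided_ideal I \<longleftrightarrow> left_ideal I \<and> right_ideal I"

definition maximal_left_ideal :: "'a::ring_1 set \<Rightarrow> bool" where
  "maximal_left_ideal M \<longleftrightarrow> left_ideal M \<and> M \<noteq> UNIV \<and>
     (\<forall>I. left_ideal I \<and> M \<subseteq> I \<and> I \<noteq> UNIV \<longrightarrow> I = M)"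

definition maximal_right_ideal :: "'a::ring_1 set \<Rightarrow> bool" where
  "maximal_right_ideal M \<longleftrightarrow> right_ideal M \<and> M \<noteq> UNIV \<and>
     (\<forall>I. right_ideal I \<and> M \<subseteq> I \<and> I \<noteq> UNIV \<longrightarrow> I = M)"

definition essential_left_ideal :: "'a::ring_1 set \<Rightarrow> bool" where
  "essential_left_ideal L \<longleftrightarrow> left_ideal L \<and>
     (\<forall>K. left_ideal K \<and> K \<noteq> {0} \<longrightarrow> L \<inter> K \<noteq> {0})"

definition essential_right_ideal :: "'a::ring_1 set \<Rightarrow> bool" where
  "essential_right_ideal L \<longleftrightarrow> right_ideal L \<and>
     (\<forall>K. right_ideal K \<and> K \<noteq> {0} \<longrightarrow> L \<inter> K \<noteq> {0})"

definition jacobson_radical :: "'a::ring_1 set" where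
  "jacobson_radical = \<Inter> {M. maximal_left_ideal M}"

definition NJ_symmetric :: "'a::ring_1 itself \<Rightarrow> bool" where
  "NJ_symmetric _ \<longleftrightarrow> (\<forall>a b c::'a. a * b * c \<in> nilpotent_elems \<longrightarrow> b * a * c \<in> jacobson_radical)"

definition left_quasi_duo :: "'a::ring_1 itself \<Rightarrow> bool" where
  "left_quasi_duo _ \<longleftrightarrow> (\<forall>M::'a set. maximal_left_ideal M \<longrightarrow> two_sided_ideal M)"

definition right_quasi_duo :: "'a::ring_1 itself \<Rightarrow> bool" where
  "right_quasi_duo _ \<longleftrightarrow> (\<forall>M::'a set. maximal_right_ideal M \<longrightarrow> two_sided_ideal M)"

definition MELT :: "'a::ring_1 itself \<Rightarrow> bool" where
  "MELT _ \<longleftrightarrow> (\<forall>M::'a set. maximal_left_ideal M \<and> essential_left_ideal M \<longrightarrow> two_sided_ideal M)"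

definition MERT :: "'a::ring_1 itself \<Rightarrow> bool" where
  "MERT _ \<longleftrightarrow> (\<forall>M::'a set. maximal_right_ideal M \<and> essential_right_ideal M \<longrightarrow> two_sided_ideal M)"

end

theory Submission
  imports Defs
begin

lemma li_add: "left_ideal I \<Longrightarrow> x \<in> I \<Longrightarrow> y \<in> I \<Longrightarrow> x + y \<in> I"
  by (auto simp: left_ideal_def additive_subgroup_def)
lemma li_neg: "left_ideal I \<Longrightarrow> x \<in> I \<Longrightarrow> - x \<in> I"
  by (auto simp: left_ideal_def additive_subgroup_def)
lemma li_diff: "left_ideal I \<Longrightarrow> x \<in> I \<Longrightarrow> y \<in> I \<Longrightarrow> x - y \<in> I"
  using li_add[of I x "- y"] li_neg[of I y] by simp
lemma li_0: "left_ideal I \<Longrightarrow> 0 \<in> I"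
  by (auto simp: left_ideal_def additive_subgroup_def)
lemma li_mult: "left_ideal I \<Longrightarrow> x \<in> I \<Longrightarrow> r * x \<in> I"
  by (auto simp: left_ideal_def)
lemma ri_add: "right_ideal I \<Longrightarrow> x \<in> I \<Longrightarrow> y \<in> I \<Longrightarrow> x + y \<in> I"
  by (auto simp: right_ideal_def additive_subgroup_def)
lemma ri_neg: "right_ideal I \<Longrightarrow> x \<in> I \<Longrightarrow> - x \<in> I"
  by (auto simp: right_ideal_def additive_subgroup_def)
lemma ri_diff: "right_ideal I \<Longrightarrow> x \<in> I \<Longrightarrow> y \<in> I \<Longrightarrow> x - y \<in> I"
  using ri_add[of I x "- y"] ri_neg[of I y] by simp
lemma ri_0: "right_ideal I \<Longrightarrow> 0 \<in> I"
  by (auto simp: right_ideal_def additive_subgroup_def)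
lemma ri_mult: "right_ideal I \<Longrightarrow> x \<in> I \<Longrightarrow> x * r \<in> I"
  by (auto simp: right_ideal_def)

lemma zero_nil: "0 \<in> nilpotent_elems"
  unfolding nilpotent_elems_def by (rule CollectI, rule exI[of _ 1], simp)

lemma NJ_use:
  assumes "NJ_symmetric TYPE('a::ring_1)" "(a::'a) * b * c = 0"
  shows "b * a * c \<in> jacobson_radical"
  using assms zero_nil unfolding NJ_symmetric_def by metis

lemma J_sub: "maximal_left_ideal M \<Longrightarrow> jacobson_radical \<subseteq> M"
  unfolding jacobson_radical_def by auto

lemma left_case:
  fixes M :: "'a::ring_1 set"
  assumes NJ: "NJ_symmetric TYPE('a)" and mx: "maximal_left_ideal M"
    and ne: "\<not> essential_left_ideal M"
  shows "two_sided_ideal M"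
proof -
  have LM: "left_ideal M" and MU: "M \<noteq> UNIV" using mx by (auto simp: maximal_left_ideal_def)
  obtain K where LK: "left_ideal K" and K0: "K \<noteq> {0}" and MK: "M \<inter> K = {0}"
    using ne LM unfolding essential_left_ideal_def by blast
  obtain k0 where k0: "k0 \<in> K" "k0 \<noteq> 0" using K0 li_0[OF LK] by blast
  define S where "S = {m + k | m k. m \<in> M \<and> k \<in> K}"
  have LS: "left_ideal S"
    unfolding left_ideal_def additive_subgroup_def S_def
  proof (intro conjI ballI allI)
    show "0 \<in> {m + k |m k. m \<in> M \<and> k \<in> K}" using li_0[OF LM] li_0[OF LK]
      by (intro CollectI exI[of _ 0] exI[of _ 0]) simp
  next
    fix x y assume "x \<in> {m + k |m k. m \<in> M \<and> k \<in> K}" "y \<in> {m + k |m k. m \<in> M \<and> k \<in> K}"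
    then obtain m1 k1 m2 k2 where "x = m1 + k1" "y = m2 + k2" "m1 \<in> M" "m2 \<in> M" "k1 \<in> K" "k2 \<in> K" by blast
    then show "x + y \<in> {m + k |m k. m \<in> M \<and> k \<in> K}"
      using li_add[OF LM] li_add[OF LK]
      by (intro CollectI exI[of _ "m1+m2"] exI[of _ "k1+k2"]) (simp add: algebra_simps)
  next
    fix x assume "x \<in> {m + k |m k. m \<in> M \<and> k \<in> K}"
    then obtain m1 k1 where "x = m1 + k1" "m1 \<in> M" "k1 \<in> K" by blast
    then show "- x \<in> {m + k |m k. m \<in> M \<and> k \<in> K}"
      using li_neg[OF LM] li_neg[OF LK]
      by (intro CollectI exI[of _ "-m1"] exI[of _ "-k1"]) (simp add: algebra_simps)
  next
    fix r x assume "x \<in> {m + k |m k. m \<in> M \<and> k \<in> K}"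
    then obtain m1 k1 where "x = m1 + k1" "m1 \<in> M" "k1 \<in> K" by blast
    then show "r * x \<in> {m + k |m k. m \<in> M \<and> k \<in> K}"
      using li_mult[OF LM] li_mult[OF LK]
      by (intro CollectI exI[of _ "r*m1"] exI[of _ "r*k1"]) (simp add: algebra_simps)
  qed
  have MS: "M \<subseteq> S"
  proof
    fix x assume "x \<in> M"
    thus "x \<in> S" unfolding S_def using li_0[OF LK] by (intro CollectI exI[of _ x] exI[of _ 0]) simp
  qed
  have "k0 \<in> S" unfolding S_def using li_0[OF LM] k0 by (intro CollectI exI[of _ 0] exI[of _ k0]) simp
  moreover have "k0 \<notin> M" using k0 MK by blast
  ultimately have "S \<noteq> M" by blast
  moreover have "\<forall>I. left_ideal I \<and> M \<subseteq> I \<and> I \<noteq> UNIV \<longrightarrow> I = M"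
    using mx unfolding maximal_left_ideal_def by blast
  ultimately have "S = UNIV" using LS MS by blast
  then obtain m e where me: "1 = m + e" "m \<in> M" "e \<in> K" unfolding S_def by blast
  have Mchar: "x \<in> M \<longleftrightarrow> x * e = 0" for x
  proof
    assume xM: "x \<in> M"
    have "x = x * m + x * e" using me(1) by (metis distrib_left mult.right_neutral)
    hence "x * e = x - x * m" by (simp add: algebra_simps)
    hence "x * e \<in> M" using li_diff[OF LM xM li_mult[OF LM me(2)]] by simp
    moreover have "x * e \<in> K" using li_mult[OF LK me(3)] .
    ultimately show "x * e = 0" using MK by blast
  next
    assume "x * e = 0"
    hence "x = x * m" using me(1) by (metis add.right_neutral distrib_left mult.right_neutral)
    thus "x \<in> M" using li_mult[OF LM me(2), of x] by simp
  qed
  have m_eq: "m = 1 - e" using me(1) by (simp add: algebra_simps)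
  have "m * e = 0" using Mchar me(2) by blast
  hence ee: "e * e = e" unfolding m_eq by (simp add: algebra_simps)
  have key: "(1 - e) * r * e = 0" for r
  proof -
    have "e * (1 - e) = e - e * e" by (simp add: right_diff_distrib)
    hence e1e: "e * (1 - e) = 0" using ee by simp
    have "e * ((1 - e) * r) * e = (e * (1 - e)) * r * e" by (simp add: mult.assoc)
    hence "e * ((1 - e) * r) * e = 0" using e1e by simp
    hence "(1 - e) * r * e * e \<in> jacobson_radical" by (rule NJ_use[OF NJ])
    hence "(1 - e) * r * e * e \<in> M" using J_sub[OF mx] by blast
    hence "(1 - e) * r * e * e * e = 0" by (rule Mchar[THEN iffD1])
    moreover have "(1 - e) * r * e * e * e = (1 - e) * r * (e * (e * e))" by (simp only: mult.assoc)
    ultimately show ?thesis using ee by simp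
  qed
  have "right_ideal M"
    unfolding right_ideal_def
  proof (intro conjI allI ballI)
    show "additive_subgroup M" using LM by (simp add: left_ideal_def)
  next
    fix r x assume xM: "x \<in> M"
    hence xe: "x * e = 0" using Mchar by blast
    have "x * r * e = x * ((1 - e) * r * e) + (x * e) * r * e"
      by (simp add: algebra_simps)
    also have "\<dots> = 0" using key xe by simp
    finally show "x * r \<in> M" using Mchar by blast
  qed
  thus ?thesis using LM by (simp add: two_sided_ideal_def)
qed

lemma rinv:
  fixes M :: "'a::ring_1 set"
  assumes mx: "maximal_right_ideal M" and Mchar: "\<And>x. x \<in> M \<longleftrightarrow> e * x = 0"
    and ed: "e * d = d" and d0: "d \<noteq> 0"
  shows "\<exists>s. d * s = e"
proof -
  have RM: "right_ideal M" using mx by (auto simp: maximal_right_ideal_def)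
  define S where "S = {m + d * s | m s. m \<in> M}"
  have RS: "right_ideal S"
    unfolding right_ideal_def additive_subgroup_def S_def
  proof (intro conjI ballI allI)
    show "0 \<in> {m + d * s |m s. m \<in> M}" using ri_0[OF RM]
      by (intro CollectI exI[of _ 0] exI[of _ 0]) simp
  next
    fix x y assume "x \<in> {m + d * s |m s. m \<in> M}" "y \<in> {m + d * s |m s. m \<in> M}"
    then obtain m1 k1 m2 k2 where "x = m1 + d * k1" "y = m2 + d * k2" "m1 \<in> M" "m2 \<in> M" by blast
    then show "x + y \<in> {m + d * s |m s. m \<in> M}"
      using ri_add[OF RM]
      by (intro CollectI exI[of _ "m1+m2"] exI[of _ "k1+k2"]) (simp add: algebra_simps)
  next
    fix x assume "x \<in> {m + d * s |m s. m \<in> M}"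
    then obtain m1 k1 where "x = m1 + d * k1" "m1 \<in> M" by blast
    then show "- x \<in> {m + d * s |m s. m \<in> M}"
      using ri_neg[OF RM]
      by (intro CollectI exI[of _ "-m1"] exI[of _ "-k1"]) (simp add: algebra_simps)
  next
    fix r x assume "x \<in> {m + d * s |m s. m \<in> M}"
    then obtain m1 k1 where "x = m1 + d * k1" "m1 \<in> M" by blast
    then show "x * r \<in> {m + d * s |m s. m \<in> M}"
      using ri_mult[OF RM]
      by (intro CollectI exI[of _ "m1*r"] exI[of _ "k1*r"]) (simp add: algebra_simps)
  qed
  have MS: "M \<subseteq> S"
  proof
    fix x assume "x \<in> M"
    thus "x \<in> S" unfolding S_def by (intro CollectI exI[of _ x] exI[of _ 0]) simp
  qed
  have "d \<in> S" unfolding S_def using ri_0[OF RM] by (intro CollectI exI[of _ 0] exI[of _ 1]) simp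
  moreover have "d \<notin> M" using Mchar ed d0 by simp
  ultimately have "S \<noteq> M" by blast
  moreover have "\<forall>I. right_ideal I \<and> M \<subseteq> I \<and> I \<noteq> UNIV \<longrightarrow> I = M"
    using mx unfolding maximal_right_ideal_def by blast
  ultimately have "S = UNIV" using RS MS by blast
  then obtain m s where ms: "1 = m + d * s" "m \<in> M" unfolding S_def by blast
  have "e = e * (m + d * s)" using ms(1) by simp
  also have "\<dots> = e * m + e * d * s" by (simp add: distrib_left mult.assoc)
  also have "\<dots> = d * s" using Mchar ms(2) ed by simp
  finally show ?thesis by (intro exI[of _ s]) simp
qed

lemma linv:
  fixes M :: "'a::ring_1 set"
  assumes mx: "maximal_right_ideal M" and Mchar: "\<And>x. x \<in> M \<longleftrightarrow> e * x = 0"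
    and ee: "e * e = e" and ed: "e * d = d" and de: "d * e = d" and d0: "d \<noteq> 0"
    and e0: "e \<noteq> 0"
  shows "\<exists>v. v * d = e"
proof -
  obtain s where s: "d * s = e" using rinv[OF mx Mchar ed d0] by blast
  define v where "v = e * s * e"
  have "d * v = (d * e) * s * e" unfolding v_def by (simp add: mult.assoc)
  hence dv: "d * v = e" using s de ee by simp
  have v0: "v \<noteq> 0" using dv e0 by auto
  have "e * v = (e * e) * s * e" unfolding v_def by (simp add: mult.assoc)
  hence ev: "e * v = v" using ee by (simp add: v_def)
  obtain w where w: "v * w = e" using rinv[OF mx Mchar ev v0] by blast
  define w' where "w' = e * w * e"
  have "v * e = e * s * (e * e)" unfolding v_def by (simp add: mult.assoc)
  hence ve: "v * e = v" using ee by (simp add: v_def)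
  have "v * w' = (v * e) * w * e" unfolding w'_def by (simp add: mult.assoc)
  hence vw': "v * w' = e" using ve w ee by simp
  have "d = d * e" using de by simp
  also have "\<dots> = d * v * w'" using vw' by (simp add: mult.assoc)
  also have "\<dots> = e * w'" using dv by simp
  also have "\<dots> = (e * e) * w * e" unfolding w'_def by (simp add: mult.assoc)
  also have "\<dots> = w'" using ee by (simp add: w'_def)
  finally have "v * d = e" using vw' by simp
  thus ?thesis by blast
qed

lemma Lmax:
  fixes M :: "'a::ring_1 set"
  assumes mx: "maximal_right_ideal M" and Mchar: "\<And>x. x \<in> M \<longleftrightarrow> e * x = 0"
    and ee: "e * e = e" and e0: "e \<noteq> 0"
  shows "maximal_left_ideal {x. \<forall>t. e * t * x * e = 0}" (is "maximal_left_ideal ?L")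
proof -
  have LL: "left_ideal ?L"
    unfolding left_ideal_def additive_subgroup_def
  proof (intro conjI ballI allI)
    show "0 \<in> ?L" by simp
  next
    fix x y assume "x \<in> ?L" "y \<in> ?L"
    thus "x + y \<in> ?L" by (simp add: distrib_left distrib_right)
  next
    fix x assume "x \<in> ?L"
    thus "- x \<in> ?L" by simp
  next
    fix r x assume "x \<in> ?L"
    hence "e * (t * r) * x * e = 0" for t by blast
    thus "r * x \<in> ?L" by (simp add: mult.assoc)
  qed
  have L2: "y * (1 - e) \<in> ?L" for y
  proof -
    have "(1 - e) * e = 0" using ee by (simp add: left_diff_distrib)
    thus ?thesis by (simp add: mult.assoc)
  qed
  have L1: "1 - e \<in> ?L" using L2[of 1] by simp
  have "e * 1 * 1 * e \<noteq> 0" using e0 ee by simp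
  hence "1 \<notin> ?L" by blast
  hence LU: "?L \<noteq> UNIV" by blast
  have "I = ?L" if LI: "left_ideal I" and sub: "?L \<subseteq> I" and IU: "I \<noteq> UNIV" for I
  proof (rule ccontr)
    assume "I \<noteq> ?L"
    then obtain x where xI: "x \<in> I" and xL: "x \<notin> ?L" using sub by blast
    then obtain t where d0: "e * t * x * e \<noteq> 0" by blast
    define d where "d = e * t * x * e"
    have "e * d = (e * e) * t * x * e" unfolding d_def by (simp add: mult.assoc)
    hence ed: "e * d = d" using ee by (simp add: d_def)
    have "d * e = e * t * x * (e * e)" unfolding d_def by (simp add: mult.assoc)
    hence de: "d * e = d" using ee by (simp add: d_def)
    have d0': "d \<noteq> 0" using d0 unfolding d_def .
    obtain v where v: "v * d = e" using linv[OF mx Mchar ee ed de d0' e0] by blast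
    define c where "c = v * e * t"
    have ce: "c * x * e = e" using v unfolding c_def d_def by (simp add: mult.assoc)
    have "1 = (1 - e) + (c * x - c * x * (1 - e))"
      using ce by (simp add: algebra_simps)
    moreover have "(1 - e) + (c * x - c * x * (1 - e)) \<in> I"
      using li_add[OF LI] li_diff[OF LI] li_mult[OF LI xI, of c] L1 L2[of "c * x"] sub
      by (simp add: mult.assoc subset_iff)
    ultimately have "1 \<in> I" by simp
    hence "r \<in> I" for r using li_mult[OF LI, of 1 r] by simp
    thus False using IU by blast
  qed
  thus ?thesis using LL LU unfolding maximal_left_ideal_def by blast
qed

lemma right_case:
  fixes M :: "'a::ring_1 set"
  assumes NJ: "NJ_symmetric TYPE('a)" and mx: "maximal_right_ideal M"
    and ne: "\<not> essential_right_ideal M"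
  shows "two_sided_ideal M"
proof -
  have RM: "right_ideal M" and MU: "M \<noteq> UNIV" using mx by (auto simp: maximal_right_ideal_def)
  obtain K where RK: "right_ideal K" and K0: "K \<noteq> {0}" and MK: "M \<inter> K = {0}"
    using ne RM unfolding essential_right_ideal_def by blast
  obtain k0 where k0: "k0 \<in> K" "k0 \<noteq> 0" using K0 ri_0[OF RK] by blast
  define S where "S = {m + k | m k. m \<in> M \<and> k \<in> K}"
  have RS: "right_ideal S"
    unfolding right_ideal_def additive_subgroup_def S_def
  proof (intro conjI ballI allI)
    show "0 \<in> {m + k |m k. m \<in> M \<and> k \<in> K}" using ri_0[OF RM] ri_0[OF RK]
      by (intro CollectI exI[of _ 0] exI[of _ 0]) simp
  next
    fix x y assume "x \<in> {m + k |m k. m \<in> M \<and> k \<in> K}" "y \<in> {m + k |m k. m \<in> M \<and> k \<in> K}"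
    then obtain m1 k1 m2 k2 where "x = m1 + k1" "y = m2 + k2" "m1 \<in> M" "m2 \<in> M" "k1 \<in> K" "k2 \<in> K" by blast
    then show "x + y \<in> {m + k |m k. m \<in> M \<and> k \<in> K}"
      using ri_add[OF RM] ri_add[OF RK]
      by (intro CollectI exI[of _ "m1+m2"] exI[of _ "k1+k2"]) (simp add: algebra_simps)
  next
    fix x assume "x \<in> {m + k |m k. m \<in> M \<and> k \<in> K}"
    then obtain m1 k1 where "x = m1 + k1" "m1 \<in> M" "k1 \<in> K" by blast
    then show "- x \<in> {m + k |m k. m \<in> M \<and> k \<in> K}"
      using ri_neg[OF RM] ri_neg[OF RK]
      by (intro CollectI exI[of _ "-m1"] exI[of _ "-k1"]) (simp add: algebra_simps)
  next
    fix r x assume "x \<in> {m + k |m k. m \<in> M \<and> k \<in> K}"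
    then obtain m1 k1 where "x = m1 + k1" "m1 \<in> M" "k1 \<in> K" by blast
    then show "x * r \<in> {m + k |m k. m \<in> M \<and> k \<in> K}"
      using ri_mult[OF RM] ri_mult[OF RK]
      by (intro CollectI exI[of _ "m1*r"] exI[of _ "k1*r"]) (simp add: algebra_simps)
  qed
  have MS: "M \<subseteq> S"
  proof
    fix x assume "x \<in> M"
    thus "x \<in> S" unfolding S_def using ri_0[OF RK] by (intro CollectI exI[of _ x] exI[of _ 0]) simp
  qed
  have "k0 \<in> S" unfolding S_def using ri_0[OF RM] k0 by (intro CollectI exI[of _ 0] exI[of _ k0]) simp
  moreover have "k0 \<notin> M" using k0 MK by blast
  ultimately have "S \<noteq> M" by blast
  moreover have "\<forall>I. right_ideal I \<and> M \<subseteq> I \<and> I \<noteq> UNIV \<longrightarrow> I = M"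
    using mx unfolding maximal_right_ideal_def by blast
  ultimately have "S = UNIV" using RS MS by blast
  then obtain m e where me: "1 = m + e" "m \<in> M" "e \<in> K" unfolding S_def by blast
  have Mchar: "x \<in> M \<longleftrightarrow> e * x = 0" for x
  proof
    assume xM: "x \<in> M"
    have "x = m * x + e * x" using me(1) by (metis distrib_right mult_1_left)
    hence "e * x = x - m * x" by (simp add: algebra_simps)
    hence "e * x \<in> M" using ri_diff[OF RM xM ri_mult[OF RM me(2)]] by simp
    moreover have "e * x \<in> K" using ri_mult[OF RK me(3)] .
    ultimately show "e * x = 0" using MK by blast
  next
    assume "e * x = 0"
    hence "x = m * x" using me(1) by (metis add.right_neutral distrib_right mult_1_left)
    thus "x \<in> M" using ri_mult[OF RM me(2), of x] by simp
  qed
  have m_eq: "m = 1 - e" using me(1) by (simp add: algebra_simps)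
  have "e * m = 0" using Mchar me(2) by blast
  hence ee: "e * e = e" unfolding m_eq by (simp add: algebra_simps)
  have e0: "e \<noteq> 0"
  proof
    assume "e = 0"
    hence "x \<in> M" for x using Mchar[of x] by simp
    thus False using MU by blast
  qed
  have key: "e * r * (1 - e) = 0" for r
  proof (rule ccontr)
    assume z0: "e * r * (1 - e) \<noteq> 0"
    have "e * (e * r * (1 - e)) = (e * e) * r * (1 - e)" by (simp add: mult.assoc)
    hence ez: "e * (e * r * (1 - e)) = e * r * (1 - e)" using ee by simp
    obtain s where s: "e * r * (1 - e) * s = e" using rinv[OF mx Mchar ez z0] by blast
    have "e * (1 - e) = e - e * e" by (simp add: right_diff_distrib)
    hence e1e: "e * (1 - e) = 0" using ee by simp
    have "e * ((1 - e) * s) * e = (e * (1 - e)) * s * e" by (simp add: mult.assoc)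
    hence "e * ((1 - e) * s) * e = 0" using e1e by simp
    hence "(1 - e) * s * e * e \<in> jacobson_radical" by (rule NJ_use[OF NJ])
    hence "(1 - e) * s * e * e \<in> {x. \<forall>t. e * t * x * e = 0}"
      using J_sub[OF Lmax[OF mx Mchar ee e0]] by blast
    hence "e * r * ((1 - e) * s * e * e) * e = 0" by blast
    moreover have "e * r * ((1 - e) * s * e * e) * e = (e * r * (1 - e) * s) * ((e * e) * e)"
      by (simp add: mult.assoc)
    hence "e * r * ((1 - e) * s * e * e) * e = e" using s ee by simp
    ultimately show False using e0 by simp
  qed
  have "left_ideal M"
    unfolding left_ideal_def
  proof (intro conjI allI ballI)
    show "additive_subgroup M" using RM by (simp add: right_ideal_def)
  next
    fix r x assume xM: "x \<in> M"
    hence xe: "e * x = 0" using Mchar by blast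
    have "e * (r * x) = (e * r * (1 - e)) * x + e * r * (e * x)"
      by (simp add: algebra_simps)
    also have "\<dots> = 0" using key xe by simp
    finally show "r * x \<in> M" using Mchar by blast
  qed
  thus ?thesis using RM by (simp add: two_sided_ideal_def)
qed

theorem theorem2p8:
  assumes "NJ_symmetric TYPE('a::ring_1)"
  shows "(MELT TYPE('a) \<longrightarrow> left_quasi_duo TYPE('a))
       \<and> (MERT TYPE('a) \<longrightarrow> right_quasi_duo TYPE('a))"
proof (intro conjI impI)
  assume h: "MELT TYPE('a)"
  show "left_quasi_duo TYPE('a)" unfolding left_quasi_duo_def
  proof (intro allI impI)
    fix M :: "'a set" assume mx: "maximal_left_ideal M"
    show "two_sided_ideal M"
    proof (cases "essential_left_ideal M")
      case True thus ?thesis using h mx unfolding MELT_def by blast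
    next
      case False thus ?thesis using left_case[OF assms mx] by blast
    qed
  qed
next
  assume h: "MERT TYPE('a)"
  show "right_quasi_duo TYPE('a)" unfolding right_quasi_duo_def
  proof (intro allI impI)
    fix M :: "'a set" assume mx: "maximal_right_ideal M"
    show "two_sided_ideal M"
    proof (cases "essential_right_ideal M")
      case True thus ?thesis using h mx unfolding MERT_def by blast
    next
      case False thus ?thesis using right_case[OF assms mx] by blast
    qed
  qed
qed

end
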